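(* Let $G$ be a group endowed with a bi-invariant metric $\partial$. The following are equivalent: (i) $(G,\partial)$ has the metric Bergman property; (ii) whenever $d$ is a left-invariant pseudo-metric on $G$ such that for some $\varepsilon>0$ the set $\{g\colon\partial(g,1)<\varepsilon\}$ is $d$-bounded, $d$ is bounded on $G$; (iii) whenever $G$ acts by isometries on a metric space $(X,d)$ in such a way that for every $x\in X$ there exists $\varepsilon>0$ with $\partial(g,1)<\varepsilon\Rightarrow d(x,gx)\le1/\varepsilon$, all $G$-orbits are bounded in $(X,d)$.
   Context: For $W\subseteq G$, $(W)_\varepsilon=\{g\colon\partial(g,W)<\varepsilon\}$ and $(W)_\varepsilon^k$ means $\big((W)_\varepsilon\big)^k$. $(G,\partial)$ has the metric Bergman property if whenever $W_0\subseteq W_1\subseteq\cdots$ is an increasing sequence of subsets of $G$ with $\bigcup_nW_n=G$, then for every $\varepsilon>0$ there exist $n$ and $k$ with $(W_n)_\varepsilon^k=G$. *)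

theory Defs
  imports "HOL-Analysis.Analysis" "HOL-Algebra.Group_Action"
begin

definition bi_invariant_metric :: "('g, 'b) monoid_scheme \<Rightarrow> ('g \<Rightarrow> 'g \<Rightarrow> real) \<Rightarrow> bool" where
  "bi_invariant_metric G dG \<longleftrightarrow> Metric_space (carrier G) dG \<and>
     (\<forall>h\<in>carrier G. \<forall>g\<in>carrier G. \<forall>k\<in>carrier G.
        dG (h \<otimes>\<^bsub>G\<^esub> g) (h \<otimes>\<^bsub>G\<^esub> k) = dG g k \<and> dG (g \<otimes>\<^bsub>G\<^esub> h) (k \<otimes>\<^bsub>G\<^esub> h) = dG g k)"

text \<open>(W)_eps = {g. dist(g,W) < eps}; dist(g,W) < eps iff some w in W has dG g w < eps.\<close>
definition nbhd :: "('g, 'b) monoid_scheme \<Rightarrow> ('g \<Rightarrow> 'g \<Rightarrow> real) \<Rightarrow> 'g set \<Rightarrow> real \<Rightarrow> 'g set" where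
  "nbhd G dG W eps = {g \<in> carrier G. \<exists>w\<in>W. dG g w < eps}"

fun set_pow :: "('g, 'b) monoid_scheme \<Rightarrow> 'g set \<Rightarrow> nat \<Rightarrow> 'g set" where
  "set_pow G A 0 = {\<one>\<^bsub>G\<^esub>}"
| "set_pow G A (Suc k) = A <#>\<^bsub>G\<^esub> set_pow G A k"

definition metric_Bergman :: "('g, 'b) monoid_scheme \<Rightarrow> ('g \<Rightarrow> 'g \<Rightarrow> real) \<Rightarrow> bool" where
  "metric_Bergman G dG \<longleftrightarrow>
     (\<forall>W :: nat \<Rightarrow> 'g set. (\<forall>n. W n \<subseteq> carrier G) \<and> (\<forall>n. W n \<subseteq> W (Suc n)) \<and>
        (\<Union>n. W n) = carrier G \<longrightarrow>
        (\<forall>eps>0. \<exists>n k. set_pow G (nbhd G dG (W n) eps) k = carrier G))"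

definition pseudo_metric_on :: "'a set \<Rightarrow> ('a \<Rightarrow> 'a \<Rightarrow> real) \<Rightarrow> bool" where
  "pseudo_metric_on S d \<longleftrightarrow> (\<forall>x\<in>S. d x x = 0) \<and> (\<forall>x\<in>S. \<forall>y\<in>S. d x y = d y x) \<and>
     (\<forall>x\<in>S. \<forall>y\<in>S. \<forall>z\<in>S. d x z \<le> d x y + d y z)"

definition left_invariant :: "('g, 'b) monoid_scheme \<Rightarrow> ('g \<Rightarrow> 'g \<Rightarrow> real) \<Rightarrow> bool" where
  "left_invariant G d \<longleftrightarrow> (\<forall>h\<in>carrier G. \<forall>g\<in>carrier G. \<forall>k\<in>carrier G.
        d (h \<otimes>\<^bsub>G\<^esub> g) (h \<otimes>\<^bsub>G\<^esub> k) = d g k)"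

definition d_bounded :: "('a \<Rightarrow> 'a \<Rightarrow> real) \<Rightarrow> 'a set \<Rightarrow> bool" where
  "d_bounded d S \<longleftrightarrow> (\<exists>B. \<forall>x\<in>S. \<forall>y\<in>S. d x y \<le> B)"

definition cond_ii :: "('g, 'b) monoid_scheme \<Rightarrow> ('g \<Rightarrow> 'g \<Rightarrow> real) \<Rightarrow> bool" where
  "cond_ii G dG \<longleftrightarrow> (\<forall>d. pseudo_metric_on (carrier G) d \<and> left_invariant G d \<and>
      (\<exists>eps>0. d_bounded d {g \<in> carrier G. dG g \<one>\<^bsub>G\<^esub> < eps})
      \<longrightarrow> d_bounded d (carrier G))"

text \<open>Condition (iii) for metric spaces X whose points live in the type 'x.\<close>
definition cond_iii :: "('g, 'b) monoid_scheme \<Rightarrow> ('g \<Rightarrow> 'g \<Rightarrow> real) \<Rightarrow> 'x itself \<Rightarrow> bool" where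
  "cond_iii G dG _ \<longleftrightarrow>
     (\<forall>(X :: 'x set) (d :: 'x \<Rightarrow> 'x \<Rightarrow> real) (\<phi> :: 'g \<Rightarrow> 'x \<Rightarrow> 'x).
        Metric_space X d \<and> group_action G X \<phi> \<and>
        (\<forall>g\<in>carrier G. \<forall>x\<in>X. \<forall>y\<in>X. d (\<phi> g x) (\<phi> g y) = d x y) \<and>
        (\<forall>x\<in>X. \<exists>eps>0. \<forall>g\<in>carrier G. dG g \<one>\<^bsub>G\<^esub> < eps \<longrightarrow> d x (\<phi> g x) \<le> 1 / eps)
        \<longrightarrow> (\<forall>x\<in>X. Metric_space.mbounded X d (orbit G \<phi> x)))"

end

theory Submission
  imports Defs
begin

lemma set_mult_mem: "x \<in> A <#>\<^bsub>G\<^esub> B \<longleftrightarrow> (\<exists>a\<in>A. \<exists>b\<in>B. x = a \<otimes>\<^bsub>G\<^esub> b)"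
  unfolding set_mult_def by blast

locale bim = group G for G :: "('g, 'b) monoid_scheme" (structure) +
  fixes dG :: "'g \<Rightarrow> 'g \<Rightarrow> real"
  assumes bi: "bi_invariant_metric G dG"
begin

lemma ms: "Metric_space (carrier G) dG" using bi by (simp add: bi_invariant_metric_def)

lemma dG_nonneg: "0 \<le> dG x y" by (rule Metric_space.nonneg[OF ms])
lemma dG_commute: "dG x y = dG y x" by (rule Metric_space.commute[OF ms])
lemma dG_zero: "x \<in> carrier G \<Longrightarrow> y \<in> carrier G \<Longrightarrow> dG x y = 0 \<longleftrightarrow> x = y"
  by (rule Metric_space.zero[OF ms])
lemma dG_left: "h \<in> carrier G \<Longrightarrow> g \<in> carrier G \<Longrightarrow> k \<in> carrier G \<Longrightarrow> dG (h \<otimes> g) (h \<otimes> k) = dG g k"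
  using bi by (simp add: bi_invariant_metric_def)
lemma dG_right: "h \<in> carrier G \<Longrightarrow> g \<in> carrier G \<Longrightarrow> k \<in> carrier G \<Longrightarrow> dG (g \<otimes> h) (k \<otimes> h) = dG g k"
  using bi by (simp add: bi_invariant_metric_def)

lemma dG_self: "x \<in> carrier G \<Longrightarrow> dG x x = 0" using dG_zero by blast

lemma nbhd_char: "w \<in> carrier G \<Longrightarrow> g \<in> carrier G \<Longrightarrow> dG (inv w \<otimes> g) \<one> = dG g w"
proof -
  assume w: "w \<in> carrier G" and g: "g \<in> carrier G"
  have "dG (inv w \<otimes> g) \<one> = dG (inv w \<otimes> g) (inv w \<otimes> w)" using w by simp
  also have "\<dots> = dG g w" using w g by (intro dG_left) auto
  finally show ?thesis .
qed

lemma conj_dist: "a \<in> carrier G \<Longrightarrow> g \<in> carrier G \<Longrightarrow> dG (inv a \<otimes> g \<otimes> a) \<one> = dG g \<one>"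
proof -
  assume a: "a \<in> carrier G" and g: "g \<in> carrier G"
  have "dG (inv a \<otimes> g \<otimes> a) \<one> = dG (inv a \<otimes> (g \<otimes> a)) (inv a \<otimes> a)" using a g by (simp add: m_assoc)
  also have "\<dots> = dG (g \<otimes> a) a" using a g by (intro dG_left) auto
  also have "\<dots> = dG (g \<otimes> a) (\<one> \<otimes> a)" using a by simp
  also have "\<dots> = dG g \<one>" using a g by (intro dG_right) auto
  finally show ?thesis .
qed

lemma set_pow_carrier: "A \<subseteq> carrier G \<Longrightarrow> set_pow G A j \<subseteq> carrier G"
  by (induction j) (auto simp: set_mult_mem intro!: m_closed)

lemma one_set_pow: "\<one> \<in> A \<Longrightarrow> \<one> \<in> set_pow G A j"
  by (induction j) (auto simp: set_mult_mem intro!: bexI[of _ \<one>])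

lemma set_pow_mono: "A \<subseteq> B \<Longrightarrow> set_pow G A j \<subseteq> set_pow G B j"
  apply (induction j)
   apply simp
  apply (auto simp: set_mult_def)
  done

lemma set_pow_add_mem: "A \<subseteq> carrier G \<Longrightarrow> x \<in> set_pow G A j \<Longrightarrow> y \<in> set_pow G A k \<Longrightarrow> x \<otimes> y \<in> set_pow G A (j + k)"
proof (induction j arbitrary: x)
  case 0
  then show ?case using set_pow_carrier[of A k] by auto
next
  case (Suc j)
  then obtain a x' where a: "a \<in> A" and x': "x' \<in> set_pow G A j" and x: "x = a \<otimes> x'"
    by (auto simp: set_mult_mem)
  have "x' \<otimes> y \<in> set_pow G A (j + k)" using Suc x' by blast
  moreover have "x \<otimes> y = a \<otimes> (x' \<otimes> y)" using x a x' Suc.prems set_pow_carrier[of A j] set_pow_carrier[of A k]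
    by (auto intro!: m_assoc)
  ultimately show ?case using a by (auto simp: set_mult_mem)
qed

lemma set_pow_pad: "A \<subseteq> carrier G \<Longrightarrow> \<one> \<in> A \<Longrightarrow> x \<in> set_pow G A j \<Longrightarrow> j \<le> k \<Longrightarrow> x \<in> set_pow G A k"
proof -
  assume A: "A \<subseteq> carrier G" "\<one> \<in> A" and x: "x \<in> set_pow G A j" and jk: "j \<le> k"
  have "x \<otimes> \<one> \<in> set_pow G A (j + (k - j))"
    by (rule set_pow_add_mem[OF A(1) x one_set_pow[OF A(2)]])
  moreover have "x \<otimes> \<one> = x" using x set_pow_carrier[OF A(1)] by (meson r_one subsetD)
  ultimately show ?thesis using jk by simp
qed

lemma set_pow_inv: "A \<subseteq> carrier G \<Longrightarrow> (\<forall>a\<in>A. inv a \<in> A) \<Longrightarrow> x \<in> set_pow G A j \<Longrightarrow> inv x \<in> set_pow G A j"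
proof (induction j arbitrary: x)
  case 0
  then show ?case by auto
next
  case (Suc j)
  then obtain a x' where a: "a \<in> A" and x': "x' \<in> set_pow G A j" and x: "x = a \<otimes> x'"
    by (auto simp: set_mult_mem)
  have ac: "a \<in> carrier G" using a Suc by auto
  have xc: "x' \<in> carrier G" using x' set_pow_carrier Suc by blast
  have "inv a \<in> set_pow G A 1" using a Suc.prems ac
    by (auto simp: set_mult_mem intro!: bexI[of _ "inv a"])
  hence "inv x' \<otimes> inv a \<in> set_pow G A (j + 1)"
    using set_pow_add_mem[OF Suc.prems(1)] Suc x' by blast
  moreover have "inv x = inv x' \<otimes> inv a" using x ac xc by (simp add: inv_mult_group)
  ultimately show ?case by simp
qed


lemma i_iii:
  assumes B: "metric_Bergman G dG"
  shows "cond_iii G dG TYPE('x)"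
  unfolding cond_iii_def
proof (intro allI impI ballI)
  fix X :: "'x set" and d :: "'x \<Rightarrow> 'x \<Rightarrow> real" and \<phi> :: "'g \<Rightarrow> 'x \<Rightarrow> 'x" and x
  assume H: "Metric_space X d \<and> group_action G X \<phi> \<and>
        (\<forall>g\<in>carrier G. \<forall>x\<in>X. \<forall>y\<in>X. d (\<phi> g x) (\<phi> g y) = d x y) \<and>
        (\<forall>x\<in>X. \<exists>eps>0. \<forall>g\<in>carrier G. dG g \<one> < eps \<longrightarrow> d x (\<phi> g x) \<le> 1 / eps)"
    and x: "x \<in> X"
  from H have MS: "Metric_space X d" and GA: "group_action G X \<phi>"
    and iso: "\<And>g y z. g \<in> carrier G \<Longrightarrow> y \<in> X \<Longrightarrow> z \<in> X \<Longrightarrow> d (\<phi> g y) (\<phi> g z) = d y z"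
    and cont: "\<forall>x\<in>X. \<exists>eps>0. \<forall>g\<in>carrier G. dG g \<one> < eps \<longrightarrow> d x (\<phi> g x) \<le> 1 / eps"
    by auto
  from cont x obtain eps where eps: "eps > 0"
    and P: "\<And>g. g \<in> carrier G \<Longrightarrow> dG g \<one> < eps \<Longrightarrow> d x (\<phi> g x) \<le> 1 / eps" by blast
  have img: "\<phi> g y \<in> X" if "g \<in> carrier G" "y \<in> X" for g y
    using group_action.element_image[OF GA that refl] .
  have comp: "\<phi> (g \<otimes> h) y = \<phi> g (\<phi> h y)" if "g \<in> carrier G" "h \<in> carrier G" "y \<in> X" for g h y
    using group_action.composition_rule[OF GA that(3,1,2)] .
  have one: "\<phi> \<one> x = x"
    using group_action.id_eq_one[OF GA] x by (metis restrict_apply')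
  have sub: "d x (\<phi> (g \<otimes> h) x) \<le> d x (\<phi> g x) + d x (\<phi> h x)" if g: "g \<in> carrier G" and h: "h \<in> carrier G" for g h
  proof -
    have "d x (\<phi> (g \<otimes> h) x) = d x (\<phi> g (\<phi> h x))" using comp g h x by simp
    also have "\<dots> \<le> d x (\<phi> g x) + d (\<phi> g x) (\<phi> g (\<phi> h x))"
      by (rule Metric_space.triangle[OF MS]) (use x img g h in auto)
    also have "d (\<phi> g x) (\<phi> g (\<phi> h x)) = d x (\<phi> h x)" by (rule iso[OF g x img[OF h x]])
    finally show ?thesis .
  qed
  define W where "W n = {g \<in> carrier G. d x (\<phi> g x) \<le> real n}" for n
  have "(\<forall>n. W n \<subseteq> carrier G) \<and> (\<forall>n. W n \<subseteq> W (Suc n)) \<and> (\<Union>n. W n) = carrier G"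
  proof (intro conjI allI)
    show "W n \<subseteq> carrier G" for n unfolding W_def by auto
    show "W n \<subseteq> W (Suc n)" for n unfolding W_def by auto
    show "(\<Union>n. W n) = carrier G"
    proof
      show "(\<Union>n. W n) \<subseteq> carrier G" unfolding W_def by auto
      show "carrier G \<subseteq> (\<Union>n. W n)"
      proof
        fix g assume g: "g \<in> carrier G"
        obtain n where "d x (\<phi> g x) \<le> real n" using real_arch_simple by blast
        then show "g \<in> (\<Union>n. W n)" using g unfolding W_def by blast
      qed
    qed
  qed
  note WP = this
  have "\<forall>eps>0. \<exists>n k. set_pow G (nbhd G dG (W n) eps) k = carrier G"
    using B unfolding metric_Bergman_def using WP by (elim allE[of _ W]) (erule mp)
  then obtain n k where eq: "set_pow G (nbhd G dG (W n) eps) k = carrier G"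
    using eps by blast
  define c where "c = real n + 1 / eps"
  have nb: "d x (\<phi> a x) \<le> c" if a: "a \<in> nbhd G dG (W n) eps" for a
  proof -
    from a obtain w where ac: "a \<in> carrier G" and w: "w \<in> W n" and dw: "dG a w < eps"
      unfolding nbhd_def by blast
    have wc: "w \<in> carrier G" and dwx: "d x (\<phi> w x) \<le> real n" using w unfolding W_def by auto
    define b where "b = inv w \<otimes> a"
    have bc: "b \<in> carrier G" using ac wc b_def by simp
    have ab: "a = w \<otimes> b" using ac wc b_def by (simp add: m_assoc[symmetric])
    have "dG b \<one> = dG a w" using nbhd_char[OF wc ac] b_def by simp
    hence "d x (\<phi> b x) \<le> 1 / eps" using P bc dw by simp
    moreover have "d x (\<phi> a x) \<le> d x (\<phi> w x) + d x (\<phi> b x)" using sub wc bc ab by simp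
    ultimately show ?thesis using dwx c_def by simp
  qed
  have pw: "\<forall>g \<in> set_pow G (nbhd G dG (W n) eps) j. d x (\<phi> g x) \<le> real j * c" for j
  proof (induction j)
    case 0
    then show ?case using one Metric_space.zero[OF MS, of x x] x by simp
  next
    case (Suc j)
    show ?case
    proof
      fix g assume "g \<in> set_pow G (nbhd G dG (W n) eps) (Suc j)"
      then obtain a b where a: "a \<in> nbhd G dG (W n) eps" and b: "b \<in> set_pow G (nbhd G dG (W n) eps) j"
        and g: "g = a \<otimes> b" by (auto simp: set_mult_mem)
      have ac: "a \<in> carrier G" using a unfolding nbhd_def by auto
      have "nbhd G dG (W n) eps \<subseteq> carrier G" unfolding nbhd_def by auto
      hence bc: "b \<in> carrier G" using b set_pow_carrier by blast
      have "d x (\<phi> g x) \<le> d x (\<phi> a x) + d x (\<phi> b x)" using sub ac bc g by simp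
      also have "\<dots> \<le> c + real j * c" using nb[OF a] Suc.IH b by (meson add_mono)
      finally show "d x (\<phi> g x) \<le> real (Suc j) * c" by (simp add: algebra_simps)
    qed
  qed
  show "Metric_space.mbounded X d (orbit G \<phi> x)"
    unfolding Metric_space.mbounded_def[OF MS]
  proof (intro exI)
    show "orbit G \<phi> x \<subseteq> Metric_space.mcball X d x (real k * c)"
    proof
      fix y assume "y \<in> orbit G \<phi> x"
      then obtain g where g: "g \<in> carrier G" and y: "y = \<phi> g x" unfolding orbit_def by blast
      have "g \<in> set_pow G (nbhd G dG (W n) eps) k" using eq g by simp
      hence "d x y \<le> real k * c" using pw[of k] y by blast
      moreover have "y \<in> X" using img g x y by simp
      ultimately show "y \<in> Metric_space.mcball X d x (real k * c)"
        by (simp add: Metric_space.in_mcball[OF MS] x)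
    qed
  qed
qed


lemma iii_ii:
  assumes C: "cond_iii G dG TYPE('g set)"
  shows "cond_ii G dG"
  unfolding cond_ii_def
proof (intro allI impI)
  fix d :: "'g \<Rightarrow> 'g \<Rightarrow> real"
  assume H: "pseudo_metric_on (carrier G) d \<and> left_invariant G d \<and>
      (\<exists>eps>0. d_bounded d {g \<in> carrier G. dG g \<one> < eps})"
  then obtain eps B where eps: "eps > 0"
    and Bd: "\<And>x y. x \<in> carrier G \<Longrightarrow> dG x \<one> < eps \<Longrightarrow> y \<in> carrier G \<Longrightarrow> dG y \<one> < eps \<Longrightarrow> d x y \<le> B"
    unfolding d_bounded_def by blast
  from H have pm: "pseudo_metric_on (carrier G) d" and li: "left_invariant G d" by auto
  have d0: "d x x = 0" if "x \<in> carrier G" for x using pm that unfolding pseudo_metric_on_def by blast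
  have dsym: "d x y = d y x" if "x \<in> carrier G" "y \<in> carrier G" for x y
    using pm that unfolding pseudo_metric_on_def by blast
  have dtri: "d x z \<le> d x y + d y z" if "x \<in> carrier G" "y \<in> carrier G" "z \<in> carrier G" for x y z
    using pm that unfolding pseudo_metric_on_def by blast
  have dnn: "0 \<le> d x y" if "x \<in> carrier G" "y \<in> carrier G" for x y
    using dtri[of x y x] d0[of x] dsym[of x y] that by simp
  have dli: "d (h \<otimes> g) (h \<otimes> k) = d g k" if "h \<in> carrier G" "g \<in> carrier G" "k \<in> carrier G" for h g k
    using li that unfolding left_invariant_def by blast
  define X where "X = (\<lambda>g. {g}) ` carrier G"
  define D where "D A C = (if A \<in> X \<and> C \<in> X then d (the_elem A) (the_elem C) + dG (the_elem A) (the_elem C) else 0)"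
    for A C
  define \<phi> where "\<phi> g = (\<lambda>A\<in>X. {g \<otimes> the_elem A})" for g
  have Dsing: "D {a} {c} = d a c + dG a c" if "a \<in> carrier G" "c \<in> carrier G" for a c
    using that unfolding D_def X_def by auto
  have phising: "\<phi> g {a} = {g \<otimes> a}" if "a \<in> carrier G" for g a
    using that unfolding \<phi>_def X_def by auto
  have XE: "P" if "A \<in> X" "\<And>a. a \<in> carrier G \<Longrightarrow> A = {a} \<Longrightarrow> P" for A P
    using that unfolding X_def by blast
  have MS: "Metric_space X D"
  proof
    show "0 \<le> D x y" for x y
    proof (cases "x \<in> X \<and> y \<in> X")
      case True
      have xyX: "x \<in> X" "y \<in> X" using True by auto
      obtain a where "a \<in> carrier G" "x = {a}" using xyX(1) by (rule XE)
      moreover obtain c where "c \<in> carrier G" "y = {c}" using xyX(2) by (rule XE)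
      ultimately have "a \<in> carrier G" "c \<in> carrier G" "x = {a}" "y = {c}" by auto
      then show ?thesis using Dsing dnn[of a c] dG_nonneg[of a c] by simp
    next
      case False
      then show ?thesis unfolding D_def by auto
    qed
    show "D x y = D y x" for x y
    proof (cases "x \<in> X \<and> y \<in> X")
      case True
      have xyX: "x \<in> X" "y \<in> X" using True by auto
      obtain a where "a \<in> carrier G" "x = {a}" using xyX(1) by (rule XE)
      moreover obtain c where "c \<in> carrier G" "y = {c}" using xyX(2) by (rule XE)
      ultimately have "a \<in> carrier G" "c \<in> carrier G" "x = {a}" "y = {c}" by auto
      then show ?thesis using Dsing[of a c] Dsing[of c a] dsym[of a c] dG_commute[of a c] by simp
    next
      case False
      then show ?thesis unfolding D_def by auto
    qed
    show "D x y = 0 \<longleftrightarrow> x = y" if "x \<in> X" "y \<in> X" for x y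
    proof -
      note xyX = that
      obtain a where "a \<in> carrier G" "x = {a}" using xyX(1) by (rule XE)
      moreover obtain c where "c \<in> carrier G" "y = {c}" using xyX(2) by (rule XE)
      ultimately have ac: "a \<in> carrier G" "c \<in> carrier G" "x = {a}" "y = {c}" by auto
      have "d a c + dG a c = 0 \<longleftrightarrow> a = c"
        using dnn[of a c] dG_nonneg[of a c] dG_zero[of a c] d0[of a] ac by auto
      then show ?thesis using ac Dsing by simp
    qed
    show "D x z \<le> D x y + D y z" if "x \<in> X" "y \<in> X" "z \<in> X" for x y z
    proof -
      note xyz = that
      obtain a where "a \<in> carrier G" "x = {a}" using xyz(1) by (rule XE)
      moreover obtain b where "b \<in> carrier G" "y = {b}" using xyz(2) by (rule XE)
      moreover obtain c where "c \<in> carrier G" "z = {c}" using xyz(3) by (rule XE)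
      ultimately have abc: "a \<in> carrier G" "b \<in> carrier G" "c \<in> carrier G" "x = {a}" "y = {b}" "z = {c}"
        by auto
      have "dG a c \<le> dG a b + dG b c" using Metric_space.triangle[OF ms] abc by blast
      then show ?thesis using abc Dsing dtri[of a b c] by simp
    qed
  qed
  have phiBij: "\<phi> g \<in> Bij X" if g: "g \<in> carrier G" for g
  proof -
    have "\<phi> g \<in> extensional X" unfolding \<phi>_def by simp
    moreover have "inj_on (\<phi> g) X"
    proof
      fix A C assume AC: "A \<in> X" "C \<in> X" "\<phi> g A = \<phi> g C"
      obtain a where a: "a \<in> carrier G" "A = {a}" using AC(1) by (rule XE)
      obtain c where c: "c \<in> carrier G" "C = {c}" using AC(2) by (rule XE)
      have "{g \<otimes> a} = {g \<otimes> c}" using AC(3) a c phising by simp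
      then show "A = C" using g a c by auto
    qed
    moreover have "\<phi> g ` X = X"
    proof
      show "\<phi> g ` X \<subseteq> X" using phising g unfolding X_def by auto
      show "X \<subseteq> \<phi> g ` X"
      proof
        fix A assume "A \<in> X"
        then obtain a where a: "a \<in> carrier G" "A = {a}" by (rule XE)
        have "\<phi> g {inv g \<otimes> a} = A" using a g phising[of "inv g \<otimes> a" g] by (simp add: m_assoc[symmetric])
        moreover have "{inv g \<otimes> a} \<in> X" using a g unfolding X_def by auto
        ultimately show "A \<in> \<phi> g ` X" by blast
      qed
    qed
    ultimately show ?thesis unfolding Bij_def bij_betw_def by blast
  qed
  have GA: "group_action G X \<phi>"
    unfolding group_action_def group_hom_def group_hom_axioms_def
  proof (intro conjI)
    show "group G" by simp
    show "group (BijGroup X)" by (rule group_BijGroup)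
    show "\<phi> \<in> hom G (BijGroup X)"
      unfolding hom_def
    proof (intro CollectI conjI ballI)
      show "\<phi> \<in> carrier G \<rightarrow> carrier (BijGroup X)" using phiBij by (auto simp: BijGroup_def)
      fix g h assume g: "g \<in> carrier G" and h: "h \<in> carrier G"
      have "\<phi> g \<otimes>\<^bsub>BijGroup X\<^esub> \<phi> h = compose X (\<phi> g) (\<phi> h)"
        using phiBij g h by (simp add: BijGroup_def)
      also have "\<dots> = \<phi> (g \<otimes> h)"
      proof
        fix A show "compose X (\<phi> g) (\<phi> h) A = \<phi> (g \<otimes> h) A"
        proof (cases "A \<in> X")
          case True
          then obtain a where a: "a \<in> carrier G" "A = {a}" by (rule XE)
          then show ?thesis using True g h phising by (simp add: compose_def m_assoc)
        next
          case False
          then show ?thesis by (simp add: compose_def \<phi>_def)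
        qed
      qed
      finally show "\<phi> (g \<otimes> h) = \<phi> g \<otimes>\<^bsub>BijGroup X\<^esub> \<phi> h" by simp
    qed
  qed
  have iso: "\<forall>g\<in>carrier G. \<forall>x\<in>X. \<forall>y\<in>X. D (\<phi> g x) (\<phi> g y) = D x y"
  proof (intro ballI)
    fix g x y assume g: "g \<in> carrier G" and "x \<in> X" "y \<in> X"
    note xyX = this
    obtain a where "a \<in> carrier G" "x = {a}" using xyX(2) by (rule XE)
    moreover obtain c where "c \<in> carrier G" "y = {c}" using xyX(3) by (rule XE)
    ultimately have ac: "a \<in> carrier G" "c \<in> carrier G" "x = {a}" "y = {c}" by auto
    then show "D (\<phi> g x) (\<phi> g y) = D x y" using g phising Dsing dli dG_left by simp
  qed
  define M where "M = max B 0"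
  define eps' where "eps' = min eps (1 / (M + eps))"
  have Mpos: "M + eps > 0" using eps M_def by simp
  have eps'pos: "eps' > 0" using eps Mpos eps'_def by simp
  have "eps' \<le> 1 / (M + eps)" using eps'_def by simp
  hence "eps' * (M + eps) \<le> 1" using Mpos by (simp add: pos_le_divide_eq)
  hence Mle: "M + eps \<le> 1 / eps'" using eps'pos by (simp add: pos_le_divide_eq mult.commute)
  have cont: "\<forall>x\<in>X. \<exists>e>0. \<forall>g\<in>carrier G. dG g \<one> < e \<longrightarrow> D x (\<phi> g x) \<le> 1 / e"
  proof (intro ballI exI[of _ eps'] conjI impI)
    show "eps' > 0" by (rule eps'pos)
    fix A g assume AX: "A \<in> X" and g: "g \<in> carrier G" and dg: "dG g \<one> < eps'"
    obtain a where a: "a \<in> carrier G" "A = {a}" using AX by (rule XE)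
    have dge: "dG g \<one> < eps" using dg eps'_def by simp
    define c where "c = inv a \<otimes> g \<otimes> a"
    have cc: "c \<in> carrier G" using a g c_def by simp
    have "dG c \<one> < eps" using conj_dist[OF a(1) g] dge c_def by simp
    hence "d \<one> c \<le> B" using Bd[of \<one> c] cc eps dG_self by simp
    moreover have "d a (g \<otimes> a) = d \<one> c"
    proof -
      have "g \<otimes> a = a \<otimes> c" using a g c_def by (simp add: m_assoc[symmetric])
      hence "d a (g \<otimes> a) = d (a \<otimes> \<one>) (a \<otimes> c)" using a by simp
      also have "\<dots> = d \<one> c" using dli[of a \<one> c] a cc by simp
      finally show ?thesis .
    qed
    moreover have "dG a (g \<otimes> a) = dG g \<one>"
    proof -
      have "dG a (g \<otimes> a) = dG (\<one> \<otimes> a) (g \<otimes> a)" using a by simp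
      also have "\<dots> = dG \<one> g" using a g by (intro dG_right) auto
      finally show ?thesis using dG_commute by simp
    qed
    ultimately have "D A (\<phi> g A) \<le> M + eps"
      using a g phising Dsing[of a "g \<otimes> a"] dge M_def by simp
    then show "D A (\<phi> g A) \<le> 1 / eps'" using Mle by simp
  qed
  have "\<forall>x\<in>X. Metric_space.mbounded X D (orbit G \<phi> x)"
    using C unfolding cond_iii_def
    apply -
    apply (drule spec[of _ X], drule spec[of _ D], drule spec[of _ \<phi>])
    apply (erule mp)
    apply (intro conjI MS GA iso cont)
    done
  moreover have oneX: "{\<one>} \<in> X" unfolding X_def by simp
  ultimately have "Metric_space.mbounded X D (orbit G \<phi> {\<one>})" by blast
  then obtain B' where B': "\<And>x y. x \<in> orbit G \<phi> {\<one>} \<Longrightarrow> y \<in> orbit G \<phi> {\<one>} \<Longrightarrow> D x y \<le> B'"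
    unfolding Metric_space.mbounded_alt[OF MS] by blast
  have orb: "{g} \<in> orbit G \<phi> {\<one>}" if "g \<in> carrier G" for g
  proof -
    have "\<phi> g {\<one>} = {g}" using phising[of \<one> g] that by simp
    then show ?thesis unfolding orbit_def using that by blast
  qed
  show "d_bounded d (carrier G)"
    unfolding d_bounded_def
  proof (intro exI ballI)
    fix x y assume x: "x \<in> carrier G" and y: "y \<in> carrier G"
    have "D {x} {y} \<le> B'" using B' orb x y by blast
    then show "d x y \<le> B'" using Dsing x y dG_nonneg[of x y] by simp
  qed
qed


lemma dG_inv: "a \<in> carrier G \<Longrightarrow> v \<in> carrier G \<Longrightarrow> dG (inv a) (inv v) = dG a v"
proof -
  assume a: "a \<in> carrier G" and v: "v \<in> carrier G"
  have "dG (inv a) (inv v) = dG (a \<otimes> inv a) (a \<otimes> inv v)" using a v by (intro dG_left[symmetric]) auto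
  also have "\<dots> = dG \<one> (a \<otimes> inv v)" using a by simp
  also have "\<dots> = dG (\<one> \<otimes> v) (a \<otimes> inv v \<otimes> v)" using a v by (intro dG_right[symmetric]) auto
  also have "\<one> \<otimes> v = v" using v by simp
  also have "a \<otimes> inv v \<otimes> v = a" using a v by (simp add: m_assoc)
  finally show ?thesis using dG_commute by simp
qed

lemma set_pow_one_mem: "A \<subseteq> carrier G \<Longrightarrow> g \<in> A \<Longrightarrow> g \<in> set_pow G A 1"
proof -
  assume A: "A \<subseteq> carrier G" and g: "g \<in> A"
  have "g = g \<otimes> \<one>" using A g by auto
  then show ?thesis using g by (auto simp: set_mult_mem intro!: bexI[of _ g])
qed

lemma ii_i:
  assumes C: "cond_ii G dG"
  shows "metric_Bergman G dG"
  unfolding metric_Bergman_def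
proof (intro allI impI)
  fix W :: "nat \<Rightarrow> 'g set" and eps :: real
  assume HW: "(\<forall>n. W n \<subseteq> carrier G) \<and> (\<forall>n. W n \<subseteq> W (Suc n)) \<and> (\<Union>n. W n) = carrier G"
    and eps: "eps > 0"
  have Wsub: "W n \<subseteq> carrier G" for n using HW by blast
  have Wmono: "W m \<subseteq> W n" if "m \<le> n" for m n
    using lift_Suc_mono_le[of W, OF _ that] HW by blast
  have Wcov: "\<exists>n. g \<in> W n" if "g \<in> carrier G" for g
  proof -
    have "g \<in> (\<Union>n. W n)" using HW that by simp
    then show ?thesis by blast
  qed
  define V where "V n = {g \<in> W n. inv g \<in> W n}" for n
  have Vmono: "V m \<subseteq> V n" if "m \<le> n" for m n
    using Wmono[OF that] unfolding V_def by blast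
  have Vcov: "\<exists>n. g \<in> V n" if g: "g \<in> carrier G" for g
  proof -
    obtain a where a: "g \<in> W a" using Wcov g by blast
    obtain b where b: "inv g \<in> W b" using Wcov g by blast
    have "g \<in> W (max a b)" using a Wmono[of a "max a b"] by auto
    moreover have "inv g \<in> W (max a b)" using b Wmono[of b "max a b"] by auto
    ultimately show ?thesis unfolding V_def by blast
  qed
  have VW: "V n \<subseteq> W n" for n unfolding V_def by blast
  have Vsub: "V n \<subseteq> carrier G" for n using VW Wsub by blast
  define S where "S n = nbhd G dG (V n) eps" for n
  have Ssub: "S n \<subseteq> carrier G" for n unfolding S_def nbhd_def by blast
  have Smono: "S m \<subseteq> S n" if "m \<le> n" for m n
    using Vmono[OF that] unfolding S_def nbhd_def by blast
  have SW: "S n \<subseteq> nbhd G dG (W n) eps" for n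
    using VW unfolding S_def nbhd_def by blast
  have Ssym: "\<forall>a\<in>S n. inv a \<in> S n" for n
  proof
    fix a assume "a \<in> S n"
    then obtain v where a: "a \<in> carrier G" and v: "v \<in> V n" and dv: "dG a v < eps"
      unfolding S_def nbhd_def by blast
    have vc: "v \<in> carrier G" using v Vsub by blast
    have "inv v \<in> V n" using v vc unfolding V_def by simp
    moreover have "dG (inv a) (inv v) < eps" using dG_inv[OF a vc] dv by simp
    ultimately show "inv a \<in> S n" using a unfolding S_def nbhd_def by auto
  qed
  have VS: "g \<in> S n" if "g \<in> V n" for g n
  proof -
    have "g \<in> carrier G" using that Vsub by blast
    then have "dG g g < eps" using eps dG_self by simp
    then show ?thesis using that \<open>g \<in> carrier G\<close> unfolding S_def nbhd_def by blast
  qed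
  obtain m0 where m0: "\<one> \<in> V m0" using Vcov[of \<one>] by auto
  define m1 where "m1 = Suc m0"
  have one_S: "\<one> \<in> S n" if "m1 \<le> n" for n
    using VS[of \<one> n] Vmono[of m0 n] m0 that m1_def by auto
  define T where "T n = set_pow G (S n) n" for n
  have Tex: "\<exists>m. g \<in> T m" if g: "g \<in> carrier G" for g
  proof -
    obtain n where n: "g \<in> V n" using Vcov g by blast
    define m where "m = max n m1"
    have "g \<in> S m" using VS[of g m] Vmono[of n m] n m_def by auto
    hence "g \<in> set_pow G (S m) 1" using set_pow_one_mem Ssub by blast
    have mm: "m1 \<le> m" "1 \<le> m" by (auto simp: m_def m1_def)
    have "g \<in> set_pow G (S m) m"
      by (rule set_pow_pad[OF Ssub one_S[OF mm(1)] \<open>g \<in> set_pow G (S m) 1\<close> mm(2)])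
    then show ?thesis unfolding T_def by blast
  qed
  define len where "len g = (LEAST m. g \<in> T m)" for g
  have lenT: "g \<in> T (len g)" if "g \<in> carrier G" for g
    unfolding len_def using Tex[OF that] by (rule LeastI_ex)
  have lenle: "len g \<le> m" if "g \<in> T m" for g m
    unfolding len_def using that by (rule Least_le)
  have len1: "len \<one> = 0" using lenle[of \<one> 0] unfolding T_def by simp
  have leninv: "len (inv g) \<le> len g" if g: "g \<in> carrier G" for g
  proof -
    have "inv g \<in> T (len g)" using lenT[OF g] set_pow_inv[OF Ssub Ssym] unfolding T_def by blast
    then show ?thesis by (rule lenle)
  qed
  have leninv_eq: "len (inv g) = len g" if g: "g \<in> carrier G" for g
    using leninv[OF g] leninv[of "inv g"] g by simp
  have lenmul: "len (g \<otimes> h) \<le> len g + len h" if g: "g \<in> carrier G" and h: "h \<in> carrier G" for g h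
  proof -
    define N where "N = len g + len h"
    have "g \<in> set_pow G (S N) (len g)"
      using lenT[OF g] set_pow_mono[OF Smono[of "len g" N]] N_def unfolding T_def by auto
    moreover have "h \<in> set_pow G (S N) (len h)"
      using lenT[OF h] set_pow_mono[OF Smono[of "len h" N]] N_def unfolding T_def by auto
    ultimately have "g \<otimes> h \<in> T N" using set_pow_add_mem[OF Ssub] N_def unfolding T_def by blast
    then show ?thesis using lenle N_def by blast
  qed
  define d where "d x y = real (len (inv x \<otimes> y))" for x y
  have pm: "pseudo_metric_on (carrier G) d"
    unfolding pseudo_metric_on_def
  proof (intro conjI ballI)
    fix x assume "x \<in> carrier G"
    then show "d x x = 0" unfolding d_def using len1 by simp
  next
    fix x y assume x: "x \<in> carrier G" and y: "y \<in> carrier G"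
    have "inv (inv x \<otimes> y) = inv y \<otimes> x" using x y by (simp add: inv_mult_group)
    then show "d x y = d y x" unfolding d_def using leninv_eq[of "inv x \<otimes> y"] x y by simp
  next
    fix x y z assume x: "x \<in> carrier G" and y: "y \<in> carrier G" and z: "z \<in> carrier G"
    have "inv x \<otimes> z = (inv x \<otimes> y) \<otimes> (inv y \<otimes> z)" using x y z
      by (simp add: m_assoc) (simp add: m_assoc[symmetric])
    then show "d x z \<le> d x y + d y z" unfolding d_def using lenmul[of "inv x \<otimes> y" "inv y \<otimes> z"] x y z by simp
  qed
  have li: "left_invariant G d"
    unfolding left_invariant_def
  proof (intro ballI)
    fix h g k assume h: "h \<in> carrier G" and g: "g \<in> carrier G" and k: "k \<in> carrier G"
    have "inv (h \<otimes> g) \<otimes> (h \<otimes> k) = inv g \<otimes> k" using h g k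
      by (simp add: inv_mult_group m_assoc[symmetric]) (simp add: m_assoc)
    then show "d (h \<otimes> g) (h \<otimes> k) = d g k" unfolding d_def by simp
  qed
  have ball: "len g \<le> m1" if g: "g \<in> carrier G" and dg: "dG g \<one> < eps" for g
  proof -
    have "\<one> \<in> V m1" using m0 Vmono[of m0 m1] m1_def by auto
    hence "g \<in> S m1" using g dg unfolding S_def nbhd_def by blast
    hence "g \<in> set_pow G (S m1) 1" using set_pow_one_mem Ssub by blast
    hence "g \<in> set_pow G (S m1) m1"
      by (rule set_pow_pad[OF Ssub one_S[OF order_refl]]) (simp add: m1_def)
    hence "g \<in> T m1" unfolding T_def .
    then show ?thesis by (rule lenle)
  qed
  have "d_bounded d {g \<in> carrier G. dG g \<one> < eps}"
    unfolding d_bounded_def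
  proof (intro exI[of _ "real (2 * m1)"] ballI)
    fix x y assume x: "x \<in> {g \<in> carrier G. dG g \<one> < eps}" and y: "y \<in> {g \<in> carrier G. dG g \<one> < eps}"
    have "len (inv x \<otimes> y) \<le> len (inv x) + len y" using x y lenmul by simp
    also have "\<dots> = len x + len y" using x leninv_eq by simp
    also have "\<dots> \<le> 2 * m1" using ball[of x] ball[of y] x y by simp
    finally show "d x y \<le> real (2 * m1)" unfolding d_def by linarith
  qed
  with C pm li eps have "d_bounded d (carrier G)" unfolding cond_ii_def by blast
  then obtain B where B: "\<And>x y. x \<in> carrier G \<Longrightarrow> y \<in> carrier G \<Longrightarrow> d x y \<le> B"
    unfolding d_bounded_def by blast
  define N where "N = max m1 (nat \<lceil>B\<rceil>)"
  have "set_pow G (nbhd G dG (W N) eps) N = carrier G"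
  proof
    show "set_pow G (nbhd G dG (W N) eps) N \<subseteq> carrier G"
      by (rule set_pow_carrier) (auto simp: nbhd_def)
    show "carrier G \<subseteq> set_pow G (nbhd G dG (W N) eps) N"
    proof
      fix g assume g: "g \<in> carrier G"
      have "real (len g) = d \<one> g" unfolding d_def using g by simp
      also have "\<dots> \<le> B" using B g by simp
      also have "\<dots> \<le> real (nat \<lceil>B\<rceil>)" by (rule real_nat_ceiling_ge)
      finally have "len g \<le> N" unfolding N_def by linarith
      have "g \<in> set_pow G (S N) (len g)"
        using lenT[OF g] set_pow_mono[OF Smono[of "len g" N]] \<open>len g \<le> N\<close> unfolding T_def by auto
      hence "g \<in> set_pow G (S N) N"
        using set_pow_pad[OF Ssub one_S[of N]] \<open>len g \<le> N\<close> N_def by auto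
      then show "g \<in> set_pow G (nbhd G dG (W N) eps) N" using set_pow_mono[OF SW] by blast
    qed
  qed
  then show "\<exists>n k. set_pow G (nbhd G dG (W n) eps) k = carrier G" by blast
qed

end

theorem proposition4p11:
  fixes G :: "('g, 'b) monoid_scheme" and dG :: "'g \<Rightarrow> 'g \<Rightarrow> real"
  assumes "group G"
    and "bi_invariant_metric G dG"
  shows "(metric_Bergman G dG \<longleftrightarrow> cond_ii G dG)
       \<and> (metric_Bergman G dG \<longleftrightarrow> cond_iii G dG TYPE('g set))
       \<and> (metric_Bergman G dG \<longrightarrow> cond_iii G dG TYPE('x))"
proof -
  interpret bim G dG using assms by (intro bim.intro) (auto simp: bim_axioms_def)
  have a: "metric_Bergman G dG \<Longrightarrow> cond_iii G dG TYPE('g set)" by (rule i_iii)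
  have b: "metric_Bergman G dG \<Longrightarrow> cond_iii G dG TYPE('x)" by (rule i_iii)
  have c: "cond_iii G dG TYPE('g set) \<Longrightarrow> cond_ii G dG" by (rule iii_ii)
  have d: "cond_ii G dG \<Longrightarrow> metric_Bergman G dG" by (rule ii_i)
  show ?thesis using a b c d by blast
qed

end
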